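(* Let $n,m\in\mathbb{N}$, $f:\mathbb{F}_2^n\to\mathbb{F}_2$, $S\subseteq\mathbb{F}_2^n$, and let $g$ be the indicator function of $S$. Let $p=2^{-n}\sum_{\mathbf{x}\in S}|\mathcal{H}^{(m)}_f(\mathbf{x})|^2$. Then when the three-query algorithm $A^{(m)3,3}_n(g,f,f)$ is executed, the probability that the measured $n$-bit outcome is different from $0^n$ (i.e. contains at least one $1$) equals $4p-4p^2$.
   Context: $\zeta_m=e^{2\pi i/m}$, $\overline{\zeta_m}$ its complex conjugate; $wt$ is Hamming weight; $\mathbf{x}\cdot\mathbf{y}=\bigoplus_i x_iy_i$. The $m$-Hadamard transform is $\mathcal{H}^{(m)}_f(\boldsymbol{\omega})=2^{-n/2}\sum_{\mathbf{x}}(-1)^{f(\mathbf{x})\oplus\mathbf{x}\cdot\boldsymbol{\omega}}\zeta_m^{wt(\mathbf{x})}$. Gates: $\mathrm{H}$ Hadamard; $\Omega_m=\frac{1}{\sqrt2}\begin{pmatrix}1&\zeta_m\\1&-\zeta_m\end{pmatrix}$; $\overline{\Omega}_m=\frac{1}{\sqrt2}\begin{pmatrix}1&\overline{\zeta_m}\\1&-\overline{\zeta_m}\end{pmatrix}$; $U_f$ is the phase oracle $\ket{\mathbf{x}}\mapsto(-1)^{f(\mathbf{x})}\ket{\mathbf{x}}$. Algorithm $A^{(m)3,3}_n(f_1,f_2,f_3)$: starting from $\ket{0^n}$, apply in order $\mathrm{H}^{\otimes n}$, $U_{f_2}$, $\Omega_m^{\otimes n}$, $U_{f_1}$, $\mathrm{H}^{\otimes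 n}$, $U_{f_3}$, $\overline{\Omega}_m^{\otimes n}$, then measure all $n$ qubits in the computational basis. *)

theory Defs
  imports Complex_Main
begin

text \<open>n-bit strings (elements of F_2^n) are boolean lists of length n;
  False = 0, True = 1.  An n-qubit state is a function from bit strings to complex amplitudes
  (only its values on bitstrings n matter).\<close>

definition bitstrings :: "nat \<Rightarrow> bool list set" where
  "bitstrings n = {xs. length xs = n}"

definition sgn1 :: "bool \<Rightarrow> complex" where
  "sgn1 b = (if b then -1 else 1)"

definition zeta :: "nat \<Rightarrow> complex" where
  "zeta m = exp (2 * of_real pi * \<i> / of_nat m)"

definition wt :: "bool list \<Rightarrow> nat" where
  "wt x = length (filter id x)"

definition dotp :: "bool list \<Rightarrow> bool list \<Rightarrow> bool" where
  "dotp x y = odd (length (filter id (map2 (\<and>) x y)))"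

definition mhadamard :: "nat \<Rightarrow> nat \<Rightarrow> (bool list \<Rightarrow> bool) \<Rightarrow> bool list \<Rightarrow> complex" where
  "mhadamard m n f \<omega> =
     (1 / of_real (sqrt (2 ^ n))) *
     (\<Sum>x\<in>bitstrings n. sgn1 (f x \<noteq> dotp x \<omega>) * zeta m ^ wt x)"

text \<open>Single-qubit gates as matrices G out in (row = output bit, column = input bit).\<close>
definition gH :: "bool \<Rightarrow> bool \<Rightarrow> complex" where
  "gH out inp = sgn1 (out \<and> inp) / of_real (sqrt 2)"

definition gOmega :: "complex \<Rightarrow> bool \<Rightarrow> bool \<Rightarrow> complex" where
  "gOmega z out inp = (if inp then (if out then - z else z) else 1) / of_real (sqrt 2)"

definition tensor_gate :: "nat \<Rightarrow> (bool \<Rightarrow> bool \<Rightarrow> complex) \<Rightarrow> (bool list \<Rightarrow> complex) \<Rightarrow> bool list \<Rightarrow> complex" where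
  "tensor_gate n G \<psi> y = (\<Sum>x\<in>bitstrings n. (\<Prod>i<n. G (y ! i) (x ! i)) * \<psi> x)"

definition phase_oracle :: "(bool list \<Rightarrow> bool) \<Rightarrow> (bool list \<Rightarrow> complex) \<Rightarrow> bool list \<Rightarrow> complex" where
  "phase_oracle f \<psi> x = sgn1 (f x) * \<psi> x"

definition init_state :: "nat \<Rightarrow> bool list \<Rightarrow> complex" where
  "init_state n x = (if x = replicate n False then 1 else 0)"

definition alg33_state :: "nat \<Rightarrow> nat \<Rightarrow> (bool list \<Rightarrow> bool) \<Rightarrow> (bool list \<Rightarrow> bool)
    \<Rightarrow> (bool list \<Rightarrow> bool) \<Rightarrow> bool list \<Rightarrow> complex" where
  "alg33_state m n f1 f2 f3 =
     tensor_gate n (gOmega (cnj (zeta m)))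
      (phase_oracle f3
        (tensor_gate n gH
          (phase_oracle f1
            (tensor_gate n (gOmega (zeta m))
              (phase_oracle f2
                (tensor_gate n gH (init_state n)))))))"

definition alg33_prob :: "nat \<Rightarrow> nat \<Rightarrow> (bool list \<Rightarrow> bool) \<Rightarrow> (bool list \<Rightarrow> bool)
    \<Rightarrow> (bool list \<Rightarrow> bool) \<Rightarrow> bool list \<Rightarrow> real" where
  "alg33_prob m n f1 f2 f3 y = (cmod (alg33_state m n f1 f2 f3 y))\<^sup>2"

end

theory Submission
  imports Defs
begin

lemma sgn1_neq: "sgn1 (a \<noteq> b) = sgn1 a * sgn1 b"
  by (auto simp: sgn1_def)

lemma sgn1_eq_not: "sgn1 (a = (\<not> b)) = sgn1 a * sgn1 b"
  by (auto simp: sgn1_def)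

lemma dotp_Cons: "dotp (a#x) (b#y) = ((a \<and> b) \<noteq> dotp x y)"
  by (auto simp: dotp_def)

lemma dotp_sym: "dotp x y = dotp y x"
proof (induction x arbitrary: y)
  case Nil then show ?case by (simp add: dotp_def)
next
  case (Cons a x) then show ?case by (cases y) (auto simp: dotp_Cons dotp_def)
qed

lemma wt_Cons: "wt (a#x) = (if a then 1 else 0) + wt x"
  by (simp add: wt_def)

lemma prodH: "length x = n \<Longrightarrow> length y = n \<Longrightarrow>
  (\<Prod>i<n. gH (y!i) (x!i)) = sgn1 (dotp x y) / of_real (sqrt 2) ^ n"
proof (induction n arbitrary: x y)
  case 0 then show ?case by (simp add: dotp_def sgn1_def)
next
  case (Suc n)
  then obtain a x' b y' where x: "x = a#x'" and y: "y = b#y'" and l: "length x' = n" "length y' = n"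
    by (metis length_Suc_conv)
  have "(\<Prod>i<Suc n. gH (y!i) (x!i)) = gH b a * (\<Prod>i<n. gH (y'!i) (x'!i))"
    by (subst prod.lessThan_Suc_shift) (simp add: x y)
  also have "\<dots> = gH b a * (sgn1 (dotp x' y') / of_real (sqrt 2) ^ n)" using Suc.IH l by simp
  also have "\<dots> = sgn1 (dotp x y) / of_real (sqrt 2) ^ Suc n"
    by (simp add: x y dotp_Cons gH_def sgn1_def)
  finally show ?case .
qed

lemma prodO: "length x = n \<Longrightarrow> length y = n \<Longrightarrow>
  (\<Prod>i<n. gOmega z (y!i) (x!i)) = z ^ wt x * (sgn1 (dotp x y) / of_real (sqrt 2) ^ n)"
proof (induction n arbitrary: x y)
  case 0 then show ?case by (simp add: dotp_def sgn1_def wt_def)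
next
  case (Suc n)
  then obtain a x' b y' where x: "x = a#x'" and y: "y = b#y'" and l: "length x' = n" "length y' = n"
    by (metis length_Suc_conv)
  have "(\<Prod>i<Suc n. gOmega z (y!i) (x!i)) = gOmega z b a * (\<Prod>i<n. gOmega z (y'!i) (x'!i))"
    by (subst prod.lessThan_Suc_shift) (simp add: x y)
  also have "\<dots> = gOmega z b a * (z ^ wt x' * (sgn1 (dotp x' y') / of_real (sqrt 2) ^ n))" using Suc.IH l by simp
  also have "\<dots> = z ^ wt x * (sgn1 (dotp x y) / of_real (sqrt 2) ^ Suc n)"
    by (simp add: x y dotp_Cons sgn1_neq gOmega_def wt_Cons sgn1_def)
  finally show ?case .
qed


lemma dotp_Nil2[simp]: "dotp y [] = False" "dotp [] y = False"
  by (auto simp: dotp_def)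

lemma dotp_replicate: "dotp y (replicate k False) = False"
proof (induction y arbitrary: k)
  case Nil then show ?case by simp
next
  case (Cons a y) then show ?case by (cases k) (auto simp: dotp_Cons)
qed

lemma sgn1_sq[simp]: "sgn1 b * sgn1 b = 1" and cnj_sgn1[simp]: "cnj (sgn1 b) = sgn1 b"
  and cmod_sgn1[simp]: "cmod (sgn1 b) = 1"
  by (auto simp: sgn1_def)

lemma finite_bits[simp]: "finite (bitstrings n)"
proof -
  have "bitstrings n = {xs. set xs \<subseteq> UNIV \<and> length xs = n}" by (auto simp: bitstrings_def)
  then show ?thesis using finite_lists_length_eq[of "UNIV::bool set" n] by simp
qed

lemma card_bits: "card (bitstrings n) = 2 ^ n"
proof -
  have "bitstrings n = {xs. set xs \<subseteq> UNIV \<and> length xs = n}" by (auto simp: bitstrings_def)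
  then show ?thesis using card_lists_length_eq[of "UNIV::bool set" n] by simp
qed

lemma bits_Suc: "bitstrings (Suc n) = Cons True ` bitstrings n \<union> Cons False ` bitstrings n"
  by (auto simp: bitstrings_def length_Suc_conv)

lemma sum_bits_Suc: "sum F (bitstrings (Suc n)) =
   sum (\<lambda>x. F (True#x)) (bitstrings n) + sum (\<lambda>x. F (False#x)) (bitstrings n)"
  unfolding bits_Suc
  by (subst sum.union_disjoint) (auto simp: sum.reindex)

lemma sgnTF: "sgn1 (True \<and> a) = sgn1 a" "sgn1 (False \<and> a) = 1"
  by (auto simp: sgn1_def)

lemma orth: "x \<in> bitstrings n \<Longrightarrow> w \<in> bitstrings n \<Longrightarrow>
  (\<Sum>y\<in>bitstrings n. sgn1 (dotp y x) * sgn1 (dotp y w)) = (if x = w then 2 ^ n else 0)"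
proof (induction n arbitrary: x w)
  case 0 then show ?case by (simp add: bitstrings_def)
next
  case (Suc n)
  have "length x = Suc n" "length w = Suc n" using Suc.prems by (auto simp: bitstrings_def)
  then obtain a x' b w' where x: "x = a#x'" and w: "w = b#w'" and l: "x' \<in> bitstrings n" "w' \<in> bitstrings n"
    unfolding length_Suc_conv bitstrings_def by blast
  have "(\<Sum>y\<in>bitstrings (Suc n). sgn1 (dotp y x) * sgn1 (dotp y w))
     = (sgn1 a * sgn1 b + 1) * (\<Sum>y\<in>bitstrings n. sgn1 (dotp y x') * sgn1 (dotp y w'))"
  proof -
    have "(\<Sum>y\<in>bitstrings (Suc n). sgn1 (dotp y x) * sgn1 (dotp y w))
       = (\<Sum>y\<in>bitstrings n. (sgn1 a * sgn1 b) * (sgn1 (dotp y x') * sgn1 (dotp y w')))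
         + (\<Sum>y\<in>bitstrings n. sgn1 (dotp y x') * sgn1 (dotp y w'))"
      unfolding sum_bits_Suc x w dotp_Cons sgn1_neq
      by (simp only: sgnTF mult_1_left mult_ac)
    then show ?thesis by (simp add: sum_distrib_left[symmetric] distrib_right)
  qed
  also have "\<dots> = (if x = w then 2 ^ Suc n else 0)"
    using Suc.IH[OF l] by (auto simp: x w sgn1_def)
  finally show ?case .
qed

definition hh :: "nat \<Rightarrow> bool list \<Rightarrow> bool list \<Rightarrow> complex" where
  "hh n y x = sgn1 (dotp y x) * of_real (1 / sqrt (2 ^ n))"

lemma hh_sym: "hh n y x = hh n x y"
  by (simp add: hh_def dotp_sym)

lemma cnj_hh[simp]: "cnj (hh n y x) = hh n y x"
  by (simp add: hh_def)

lemma hh_orth: "x \<in> bitstrings n \<Longrightarrow> w \<in> bitstrings n \<Longrightarrow>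
  (\<Sum>y\<in>bitstrings n. hh n y x * hh n y w) = (if x = w then 1 else 0)"
proof -
  assume a: "x \<in> bitstrings n" "w \<in> bitstrings n"
  have "(\<Sum>y\<in>bitstrings n. hh n y x * hh n y w)
     = (\<Sum>y\<in>bitstrings n. sgn1 (dotp y x) * sgn1 (dotp y w)) * of_real (1 / sqrt (2 ^ n))^2"
    by (simp add: hh_def sum_distrib_right sum_divide_distrib power2_eq_square mult_ac)
  also have "of_real (1 / sqrt (2 ^ n))^2 = (1 / 2 ^ n :: complex)"
  proof -
    have r: "(1 / sqrt (2 ^ n :: real))^2 = 1 / 2^n" by (simp add: power_divide)
    have "of_real (1 / sqrt (2 ^ n))^2 = complex_of_real ((1 / sqrt (2 ^ n))^2)"
      by (simp only: of_real_power)
    also have "\<dots> = 1 / 2 ^ n" by (simp only: r) simp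
    finally show ?thesis .
  qed
  finally show ?thesis using orth[OF a] by simp
qed

lemma tgH: "y \<in> bitstrings n \<Longrightarrow> tensor_gate n gH \<psi> y = (\<Sum>x\<in>bitstrings n. hh n y x * \<psi> x)"
  unfolding tensor_gate_def
  by (rule sum.cong) (auto simp: prodH bitstrings_def hh_def dotp_sym real_sqrt_power divide_inverse)

lemma tgO: "y \<in> bitstrings n \<Longrightarrow> tensor_gate n (gOmega z) \<psi> y = (\<Sum>x\<in>bitstrings n. hh n y x * (z ^ wt x * \<psi> x))"
  unfolding tensor_gate_def
  by (rule sum.cong) (auto simp: prodO bitstrings_def hh_def dotp_sym real_sqrt_power divide_inverse)

definition NN :: "nat \<Rightarrow> (bool list \<Rightarrow> complex) \<Rightarrow> real" where
  "NN n \<psi> = (\<Sum>x\<in>bitstrings n. (cmod (\<psi> x))\<^sup>2)"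

lemma of_real_NN: "complex_of_real (NN n \<psi>) = (\<Sum>x\<in>bitstrings n. \<psi> x * cnj (\<psi> x))"
  unfolding NN_def of_real_sum by (simp only: complex_norm_square)

lemma parseval: "NN n (\<lambda>y. \<Sum>x\<in>bitstrings n. hh n y x * \<psi> x) = NN n \<psi>"
proof -
  let ?B = "bitstrings n"
  have "complex_of_real (NN n (\<lambda>y. \<Sum>x\<in>?B. hh n y x * \<psi> x))
     = (\<Sum>y\<in>?B. (\<Sum>x\<in>?B. hh n y x * \<psi> x) * (\<Sum>w\<in>?B. hh n y w * cnj (\<psi> w)))"
    by (simp add: of_real_NN cnj_sum)
  also have "\<dots> = (\<Sum>y\<in>?B. \<Sum>w\<in>?B. \<Sum>x\<in>?B. \<psi> x * (cnj (\<psi> w) * (hh n y x * hh n y w)))"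
    by (simp add: sum_distrib_left sum_distrib_right mult_ac)
  also have "\<dots> = (\<Sum>w\<in>?B. \<Sum>y\<in>?B. \<Sum>x\<in>?B. \<psi> x * (cnj (\<psi> w) * (hh n y x * hh n y w)))"
    by (rule sum.swap)
  also have "\<dots> = (\<Sum>w\<in>?B. \<Sum>x\<in>?B. \<Sum>y\<in>?B. \<psi> x * (cnj (\<psi> w) * (hh n y x * hh n y w)))"
    by (rule sum.cong[OF refl], rule sum.swap)
  also have "\<dots> = (\<Sum>w\<in>?B. \<Sum>x\<in>?B. \<psi> x * cnj (\<psi> w) * (\<Sum>y\<in>?B. hh n y x * hh n y w))"
    by (simp add: sum_distrib_left mult_ac)
  also have "\<dots> = (\<Sum>w\<in>?B. \<Sum>x\<in>?B. (if x = w then \<psi> x * cnj (\<psi> w) else 0))"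
    by (rule sum.cong[OF refl], rule sum.cong[OF refl]) (simp add: hh_orth)
  also have "\<dots> = complex_of_real (NN n \<psi>)"
    by (simp add: of_real_NN)
  finally show ?thesis by (simp only: of_real_eq_iff)
qed

lemma NN_cong: "(\<And>x. x \<in> bitstrings n \<Longrightarrow> cmod (\<psi> x) = cmod (\<phi> x)) \<Longrightarrow> NN n \<psi> = NN n \<phi>"
  unfolding NN_def by (rule sum.cong) auto

lemma NN_phase: "NN n (phase_oracle f \<psi>) = NN n \<psi>"
  by (rule NN_cong) (simp add: phase_oracle_def norm_mult)

lemma NN_H: "NN n (tensor_gate n gH \<psi>) = NN n \<psi>"
proof -
  have "NN n (tensor_gate n gH \<psi>) = NN n (\<lambda>y. \<Sum>x\<in>bitstrings n. hh n y x * \<psi> x)"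
    by (rule NN_cong) (simp add: tgH)
  then show ?thesis by (simp add: parseval)
qed

lemma NN_O: "cmod z = 1 \<Longrightarrow> NN n (tensor_gate n (gOmega z) \<psi>) = NN n \<psi>"
proof -
  assume z: "cmod z = 1"
  have "NN n (tensor_gate n (gOmega z) \<psi>) = NN n (\<lambda>y. \<Sum>x\<in>bitstrings n. hh n y x * (z ^ wt x * \<psi> x))"
    by (rule NN_cong) (simp add: tgO)
  also have "\<dots> = NN n (\<lambda>x. z ^ wt x * \<psi> x)" by (rule parseval)
  also have "\<dots> = NN n \<psi>" by (rule NN_cong) (simp add: norm_mult norm_power z)
  finally show ?thesis .
qed

lemma cmod_zeta: "cmod (zeta m) = 1"
proof -
  have "zeta m = exp (\<i> * complex_of_real (2 * pi / real m))"
    by (simp add: zeta_def mult_ac)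
  then show ?thesis by simp
qed


theorem theorem7:
  fixes n m :: nat and f :: "bool list \<Rightarrow> bool" and S :: "bool list set"
  assumes "m \<ge> 1"
    and "S \<subseteq> bitstrings n"
  defines "g \<equiv> (\<lambda>x. x \<in> S)"
    and "p \<equiv> (1 / 2 ^ n) * (\<Sum>x\<in>S. (cmod (mhadamard m n f x))\<^sup>2)"
  shows "(\<Sum>y\<in>bitstrings n - {replicate n False}. alg33_prob m n g f f y) = 4 * p - 4 * p\<^sup>2"
proof -
  let ?B = "bitstrings n"
  note SB = assms(2)
  define r where "r = replicate n False"
  define z where "z = zeta m"
  define c where "c = complex_of_real (1 / sqrt (2^n))"
  define s1 where "s1 = tensor_gate n gH (init_state n)"
  define s3 where "s3 = tensor_gate n (gOmega z) (phase_oracle f s1)"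
  define s5 where "s5 = tensor_gate n gH (phase_oracle g s3)"
  define F where "F = tensor_gate n (gOmega (cnj z)) (phase_oracle f s5)"
  have F_eq: "alg33_state m n g f f = F"
    by (simp add: alg33_state_def F_def s5_def s3_def s1_def z_def)
  have rB: "r \<in> ?B" by (simp add: r_def bitstrings_def)
  have dr: "dotp r x = False" "dotp x r = False" for x
    using dotp_sym[of r x] dotp_replicate[of x n] by (auto simp: r_def)
  have hr: "hh n r x = c" "hh n x r = c" for x
    by (simp_all add: hh_def c_def dr sgn1_def)
  have c2: "(cmod c)^2 = 1 / 2^n"
    unfolding c_def norm_of_real by (simp add: power_divide)
  have cnjc: "cnj c = c" by (simp add: c_def)
  have s1c: "s1 y = c" if y: "y \<in> ?B" for y
  proof -
    have "s1 y = (\<Sum>x\<in>?B. (if x = r then hh n y x else 0))"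
      unfolding s1_def tgH[OF y] init_state_def r_def by (rule sum.cong) auto
    also have "\<dots> = c" using rB by (simp add: hr)
    finally show ?thesis .
  qed
  have cz: "cmod z = 1" "cmod (cnj z) = 1" by (simp_all add: z_def cmod_zeta)
  have N1: "NN n s1 = 1"
  proof -
    have "NN n s1 = (\<Sum>x\<in>?B. (cmod c)^2)" unfolding NN_def by (rule sum.cong) (auto simp: s1c)
    also have "\<dots> = 1" by (simp add: c2 card_bits)
    finally show ?thesis .
  qed
  have N3: "NN n s3 = 1" using N1 by (simp add: s3_def NN_O cz NN_phase)
  have NF: "NN n F = 1" using N3 by (simp add: F_def s5_def NN_O NN_H cz NN_phase)
  have s3_eq: "s3 y = (\<Sum>x\<in>?B. hh n y x * (z ^ wt x * (sgn1 (f x) * c)))" if y: "y \<in> ?B" for y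
    unfolding s3_def tgO[OF y] by (rule sum.cong) (auto simp: phase_oracle_def s1c)
  have s3_mh: "s3 y = mhadamard m n f y * c" if y: "y \<in> ?B" for y
    unfolding s3_eq[OF y] mhadamard_def
    by (simp add: sum_distrib_left sum_distrib_right hh_def sgn1_neq sgn1_eq_not dotp_sym[of y] c_def mult_ac z_def)
  have pS: "(\<Sum>x\<in>S. (cmod (s3 x))^2) = p"
  proof -
    have "(\<Sum>x\<in>S. (cmod (s3 x))^2) = (\<Sum>x\<in>S. (cmod (mhadamard m n f x))^2 * (1 / 2^n))"
      by (rule sum.cong) (use SB in \<open>auto simp: s3_mh norm_mult power_mult_distrib c2\<close>)
    then show ?thesis by (simp add: p_def sum_divide_distrib)
  qed
  have cs3: "cnj (s3 w) = (\<Sum>x\<in>?B. hh n w x * cnj z ^ wt x * sgn1 (f x) * c)" if "w \<in> ?B" for w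
    using that by (simp add: s3_eq cnj_sum cnjc mult_ac)
  have sqn: "u * cnj u = (complex_of_real (cmod u))^2" for u
    by (metis complex_norm_square of_real_power)
  have Fr: "F r = complex_of_real (1 - 2 * p)"
  proof -
    have "F r = (\<Sum>x\<in>?B. c * (cnj z ^ wt x * (sgn1 (f x) * (\<Sum>w\<in>?B. hh n x w * (sgn1 (g w) * s3 w)))))"
      unfolding F_def tgO[OF rB] hr
      by (rule sum.cong) (auto simp: phase_oracle_def s5_def tgH)
    also have "\<dots> = (\<Sum>x\<in>?B. \<Sum>w\<in>?B. (sgn1 (g w) * s3 w) * (hh n w x * cnj z ^ wt x * sgn1 (f x) * c))"
      by (simp add: sum_distrib_left hh_sym mult_ac)
    also have "\<dots> = (\<Sum>w\<in>?B. \<Sum>x\<in>?B. (sgn1 (g w) * s3 w) * (hh n w x * cnj z ^ wt x * sgn1 (f x) * c))"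
      by (rule sum.swap)
    also have "\<dots> = (\<Sum>w\<in>?B. (sgn1 (g w) * s3 w) * cnj (s3 w))"
      by (rule sum.cong[OF refl]) (simp only: cs3 sum_distrib_left)
    also have "\<dots> = (\<Sum>w\<in>?B. complex_of_real ((if w \<in> S then -1 else 1) * (cmod (s3 w))^2))"
      by (rule sum.cong[OF refl]) (simp add: g_def sgn1_def sqn)
    also have "\<dots> = complex_of_real (\<Sum>w\<in>?B. (if w \<in> S then -1 else 1) * (cmod (s3 w))^2)"
      by simp
    also have "(\<Sum>w\<in>?B. (if w \<in> S then -1 else 1) * (cmod (s3 w))^2)
        = (\<Sum>w\<in>?B. (cmod (s3 w))^2) - 2 * (\<Sum>w\<in>?B. if w \<in> S then (cmod (s3 w))^2 else 0)"
      unfolding sum_distrib_left sum_subtractf[symmetric] by (rule sum.cong) auto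
    also have "(\<Sum>w\<in>?B. if w \<in> S then (cmod (s3 w))^2 else 0) = (\<Sum>w\<in>S. (cmod (s3 w))^2)"
      using SB by (simp add: sum.inter_restrict[symmetric] Int_absorb1)
    also have "(\<Sum>w\<in>?B. (cmod (s3 w))^2) = 1" using N3 by (simp add: NN_def)
    finally show ?thesis by (simp add: pS)
  qed
  have "(\<Sum>y\<in>?B - {r}. alg33_prob m n g f f y) = NN n F - (cmod (F r))^2"
    using rB by (simp add: sum_diff1 alg33_prob_def F_eq NN_def)
  also have "\<dots> = 1 - (1 - 2 * p)^2" unfolding NF Fr norm_of_real by simp
  also have "\<dots> = 4 * p - 4 * p\<^sup>2" by (simp add: power2_eq_square algebra_simps)
  finally show ?thesis by (simp add: r_def)
qed

end
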